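(* Let $\phi:\mathbb{C}_0\to\mathbb{C}_0$ be a non-constant analytic function of the form $\phi(s)=c_0 s+\varphi(s)$ with $c_0\in\mathbb{N}_0$ and $\varphi\in\mathcal{D}$, such that $f\circ\phi\in\mathcal{A}^+$ for every $f\in\mathcal{A}^+$, so that $C_\phi f=f\circ\phi$ defines a composition operator $C_\phi:\mathcal{A}^+\to\mathcal{A}^+$. Then $C_\phi$ is an isometry (i.e. $\|C_\phi f\|_{\mathcal{A}^+}=\|f\|_{\mathcal{A}^+}$ for all $f\in\mathcal{A}^+$) if and only if $\phi(s)=c_0s+i\tau$ with $c_0\in\mathbb{N}=\{1,2,\dots\}$ and $\tau\in\mathbb{R}$.
   Context: For $\theta\in\mathbb{R}$, $\mathbb{C}_\theta=\{s\in\mathbb{C}:\operatorname{Re}s>\theta\}$. The Wiener–Dirichlet algebra $\mathcal{A}^+$ is the set of functions $f(s)=\sum_{n\ge1}a_n n^{-s}$ with $\|f\|_{\mathcal{A}^+}=\sum_{n\ge1}|a_n|<\infty$, viewed as functions on $\{\operatorname{Re}s\ge0\}$; it is a commutative unital Banach algebra under pointwise multiplication. $\mathcal{D}$ denotes the space of analytic functions $\mathbb{C}_0\to\mathbb{C}$ representable by a convergent Dirichlet series $\sum_{n\ge1}c_n n^{-s}$ for $\operatorname{Re}s$ large enough. $\mathbb{N}_0=\{0,1,2,\dots\}$. *)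

theory Defs
  imports "HOL-Analysis.Analysis"
begin

definition halfplane :: "real \<Rightarrow> complex set" where
  "halfplane \<theta> = {s. Re s > \<theta>}"

text \<open>Dirichlet series with coefficient sequence a (index n >= 1; the entry a 0 is
  multiplied by 0 powr (-s) = 0 and hence irrelevant).\<close>
definition dseries :: "(nat \<Rightarrow> complex) \<Rightarrow> complex \<Rightarrow> complex" where
  "dseries a s = (\<Sum>n. a n * (of_nat n) powr (- s))"

text \<open>Coefficient sequences of elements of the Wiener--Dirichlet algebra A^+.\<close>
definition Aplus :: "(nat \<Rightarrow> complex) set" where
  "Aplus = {a. a 0 = 0 \<and> summable (\<lambda>n. norm (a n))}"

definition Aplus_norm :: "(nat \<Rightarrow> complex) \<Rightarrow> real" where
  "Aplus_norm a = (\<Sum>n. norm (a n))"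

definition Dclass :: "(complex \<Rightarrow> complex) set" where
  "Dclass = {g. g holomorphic_on halfplane 0 \<and>
     (\<exists>c :: nat \<Rightarrow> complex. \<exists>\<sigma>::real. \<forall>s. Re s > \<sigma> \<longrightarrow>
        (\<lambda>n. c n * (of_nat n) powr (- s)) sums g s)}"

text \<open>b represents C_phi f = f o phi, where f has coefficients a.\<close>
definition comp_rep :: "(complex \<Rightarrow> complex) \<Rightarrow> (nat \<Rightarrow> complex) \<Rightarrow> (nat \<Rightarrow> complex) \<Rightarrow> bool" where
  "comp_rep \<phi> a b \<longleftrightarrow> b \<in> Aplus \<and> (\<forall>s \<in> halfplane 0. dseries a (\<phi> s) = dseries b s)"

end

theory Submission
  imports Defs
begin

definition abss :: "(nat \<Rightarrow> complex) \<Rightarrow> bool" where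
  "abss b \<longleftrightarrow> summable (\<lambda>n. norm (b n))"

lemma npow: "0 < n \<Longrightarrow> (of_nat n :: complex) powr s = exp (s * of_real (ln (real n)))"
  by (simp add: powr_def)

lemma norm_npow: "norm ((of_nat n :: complex) powr s) = (if n = 0 then 0 else real n powr Re s)"
  by (simp add: npow powr_def mult.commute)

lemma npow_real: "(of_nat n :: complex) powr (of_real \<sigma>) = of_real (real n powr \<sigma>)"
  using powr_of_real[of "real n" \<sigma>] by simp

lemma norm_npow_le1: "0 \<le> Re s \<Longrightarrow> norm ((of_nat n :: complex) powr (-s)) \<le> 1"
proof (cases "n = 0")
  case False
  assume "0 \<le> Re s"
  then have "1 \<le> real n powr Re s" using False by (intro ge_one_powr_ge_zero) auto
  then show ?thesis using False by (simp only: norm_npow) (simp add: powr_minus field_simps)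
qed simp

lemma abss_term: assumes "abss b" "0 \<le> Re s"
  shows "summable (\<lambda>n. norm (b n * of_nat n powr (-s)))"
proof (rule summable_comparison_test')
  show "summable (\<lambda>n. norm (b n))" using assms(1) by (simp add: abss_def)
  fix n :: nat
  have "norm (norm (b n * of_nat n powr (-s))) = norm (b n) * norm ((of_nat n :: complex) powr (-s))"
    by (simp add: norm_mult)
  also have "\<dots> \<le> norm (b n) * 1" by (intro mult_left_mono norm_npow_le1 assms(2)) simp
  finally show "norm (norm (b n * of_nat n powr (-s))) \<le> norm (b n)" by simp
qed

lemma abss_term': "abss b \<Longrightarrow> 0 \<le> Re s \<Longrightarrow> summable (\<lambda>n. b n * of_nat n powr (-s))"
  by (rule summable_norm_cancel, rule abss_term)

lemma abss_summable: "abss b \<Longrightarrow> summable b"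
  unfolding abss_def by (rule summable_norm_cancel)

lemma abss_add: assumes "abss a" "abss b" shows "abss (\<lambda>n. a n + b n)"
  unfolding abss_def
proof (rule summable_comparison_test')
  show "summable (\<lambda>n. norm (a n) + norm (b n))"
    using assms by (simp add: abss_def summable_add)
  fix n :: nat
  show "norm (norm (a n + b n)) \<le> norm (a n) + norm (b n)" by (simp add: norm_triangle_ineq)
qed

lemma abss_cmult: "abss b \<Longrightarrow> abss (\<lambda>n. c * b n)"
  unfolding abss_def by (simp add: norm_mult summable_mult)

lemma abss_diff: "abss a \<Longrightarrow> abss b \<Longrightarrow> abss (\<lambda>n. a n - b n)"
  using abss_add[of a "\<lambda>n. (-1) * b n"] abss_cmult[of b "-1"] by simp

lemma abss_sum: "finite I \<Longrightarrow> (\<And>i. i \<in> I \<Longrightarrow> abss (f i)) \<Longrightarrow> abss (\<lambda>n. \<Sum>i\<in>I. f i n)"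
proof (induction I rule: finite_induct)
  case empty then show ?case by (simp add: abss_def)
next
  case (insert x F) then show ?case by (simp add: abss_add)
qed

lemma dseries_add: "abss a \<Longrightarrow> abss b \<Longrightarrow> 0 \<le> Re s \<Longrightarrow>
   dseries (\<lambda>n. a n + b n) s = dseries a s + dseries b s"
  unfolding dseries_def by (simp add: distrib_right suminf_add abss_term')

lemma dseries_cmult: "abss b \<Longrightarrow> 0 \<le> Re s \<Longrightarrow> dseries (\<lambda>n. c * b n) s = c * dseries b s"
  unfolding dseries_def by (simp add: mult.assoc suminf_mult abss_term')

lemma dseries_diff: "abss a \<Longrightarrow> abss b \<Longrightarrow> 0 \<le> Re s \<Longrightarrow>
   dseries (\<lambda>n. a n - b n) s = dseries a s - dseries b s"
  unfolding dseries_def by (simp add: left_diff_distrib suminf_diff abss_term')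

lemma dseries_sum: "finite I \<Longrightarrow> (\<And>i. i \<in> I \<Longrightarrow> abss (f i)) \<Longrightarrow> 0 \<le> Re s \<Longrightarrow>
   dseries (\<lambda>n. \<Sum>i\<in>I. f i n) s = (\<Sum>i\<in>I. dseries (f i) s)"
proof (induction I rule: finite_induct)
  case empty then show ?case by (simp add: dseries_def)
next
  case (insert x F) then show ?case by (simp add: dseries_add abss_sum)
qed

definition delta :: "nat \<Rightarrow> nat \<Rightarrow> complex" where
  "delta m n = (if n = m then 1 else 0)"

lemma abss_delta: "abss (delta m)"
  unfolding abss_def delta_def
  using summable_single[of m "\<lambda>_. 1::real"] by (simp add: if_distrib cong: if_cong)

lemma dseries_delta: "dseries (delta m) s = of_nat m powr (-s)"
proof -
  have "(\<lambda>n. delta m n * of_nat n powr (-s)) = (\<lambda>n. if n = m then (of_nat n :: complex) powr (-s) else 0)"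
    by (auto simp: delta_def fun_eq_iff)
  then show ?thesis unfolding dseries_def
    using sums_single[of m "\<lambda>n. (of_nat n :: complex) powr (-s)"] by (simp add: sums_iff)
qed

lemma pw0: "0 < \<theta> \<Longrightarrow> \<theta> < (1::real) \<Longrightarrow> ((\<lambda>\<sigma>::real. \<theta> powr \<sigma>) \<longlongrightarrow> 0) at_top"
proof -
  assume t: "0 < \<theta>" "\<theta> < 1"
  then have "ln \<theta> < 0" by simp
  then have "filterlim (\<lambda>\<sigma>. ln \<theta> * \<sigma>) at_bot at_top"
    by (intro filterlim_tendsto_neg_mult_at_bot[OF tendsto_const]) (auto simp: filterlim_ident)
  then have "((\<lambda>\<sigma>. exp (ln \<theta> * \<sigma>)) \<longlongrightarrow> 0) at_top"
    by (rule filterlim_compose[OF exp_at_bot])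
  then show ?thesis using t by (simp add: powr_def mult.commute)
qed


lemma lead:
  fixes b :: "nat \<Rightarrow> complex"
  assumes sb: "abss b" and l: "1 \<le> l" and z: "\<And>j. 1 \<le> j \<Longrightarrow> j < l \<Longrightarrow> b j = 0"
  shows "((\<lambda>\<sigma>::real. of_real (real l powr \<sigma>) * dseries b (of_real \<sigma>)) \<longlongrightarrow> b l) at_top"
proof -
  define \<theta> where "\<theta> = real l / real (l+1)"
  have th: "0 < \<theta>" "\<theta> < 1" using l by (auto simp: \<theta>_def field_simps)
  define S where "S = (\<Sum>n. norm (b n))"
  have key: "norm (of_real (real l powr \<sigma>) * dseries b (of_real \<sigma>) - b l) \<le> S * \<theta> powr \<sigma>"
    if s0: "0 \<le> \<sigma>" for \<sigma>
  proof -
    define e where "e n = b n * of_real (real l powr \<sigma>) * of_nat n powr (- of_real \<sigma>)" for n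
    have st: "summable (\<lambda>n. b n * of_nat n powr (- of_real \<sigma>))"
      using abss_term'[OF sb, of "of_real \<sigma>"] s0 by simp
    have se: "summable e" unfolding e_def
      using summable_mult2[OF st, of "of_real (real l powr \<sigma>)"] by (simp add: ac_simps)
    have eq1: "of_real (real l powr \<sigma>) * dseries b (of_real \<sigma>) = suminf e"
      unfolding dseries_def e_def using suminf_mult[OF st, of "of_real (real l powr \<sigma>)"]
      by (simp add: ac_simps)
    have ss: "summable (\<lambda>n. if n = l then b l else 0)"
      using summable_single[of l "\<lambda>_. b l"] by simp
    have eq2: "suminf e - b l = (\<Sum>n. e n - (if n = l then b l else 0))"
    proof -
      have "(\<Sum>n. if n = l then b l else 0) = b l"
        using sums_single[of l "\<lambda>_. b l"] by (simp add: sums_iff)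
      then show ?thesis using suminf_diff[OF se ss] by simp
    qed
    have bound: "norm (e n - (if n = l then b l else 0)) \<le> norm (b n) * \<theta> powr \<sigma>" for n
    proof (cases "n = l")
      case True
      have "e l = b l" unfolding e_def using l
        by (simp add: npow_real powr_minus)
      then show ?thesis using True by simp
    next
      case nl: False
      show ?thesis
      proof (cases "n < l")
        case True
        then have "e n = 0" unfolding e_def using z[of n] by (cases "n = 0") auto
        then show ?thesis using nl by simp
      next
        case False
        then have nl1: "n \<ge> l + 1" using nl by simp
        have np: "(of_nat n :: complex) powr (- of_real \<sigma>) = of_real (real n powr (-\<sigma>))"
          using npow_real[of n "-\<sigma>"] by simp
        have rr: "real l powr \<sigma> * real n powr (-\<sigma>) = (real l / real n) powr \<sigma>"
          unfolding powr_divide by (simp add: powr_minus divide_inverse)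
        have "e n = b n * of_real (real l powr \<sigma> * real n powr (-\<sigma>))"
          unfolding e_def np by (simp add: mult.assoc)
        then have "e n = b n * of_real ((real l / real n) powr \<sigma>)" by (simp only: rr)
        then have "norm (e n) = norm (b n) * (real l / real n) powr \<sigma>"
          by (simp add: norm_mult)
        also have "\<dots> \<le> norm (b n) * \<theta> powr \<sigma>"
        proof (intro mult_left_mono powr_mono2 s0)
          show "real l / real n \<le> \<theta>" unfolding \<theta>_def using nl1 l
            by (simp add: frac_le)
        qed auto
        finally show ?thesis using nl by simp
      qed
    qed
    have sb': "summable (\<lambda>n. norm (b n) * \<theta> powr \<sigma>)"
      using sb unfolding abss_def by (intro summable_mult2)
    have "norm (\<Sum>n. e n - (if n = l then b l else 0)) \<le> (\<Sum>n. norm (b n) * \<theta> powr \<sigma>)"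
      by (rule norm_suminf_le[OF bound sb'])
    also have "\<dots> = S * \<theta> powr \<sigma>" unfolding S_def using sb unfolding abss_def
      by (simp add: suminf_mult2)
    finally have "norm (suminf e - b l) \<le> S * \<theta> powr \<sigma>" by (simp only: eq2)
    then show ?thesis by (simp only: eq1)
  qed
  have "((\<lambda>\<sigma>. S * \<theta> powr \<sigma>) \<longlongrightarrow> 0) at_top"
    using tendsto_mult_right_zero[OF pw0[OF th]] by simp
  moreover have "eventually (\<lambda>\<sigma>. norm (of_real (real l powr \<sigma>) * dseries b (of_real \<sigma>) - b l) \<le> S * \<theta> powr \<sigma>) at_top"
    using key by (intro eventually_at_top_linorderI[of 0]) auto
  ultimately have "((\<lambda>\<sigma>. of_real (real l powr \<sigma>) * dseries b (of_real \<sigma>) - b l) \<longlongrightarrow> 0) at_top"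
    by (rule Lim_null_comparison[rotated])
  then show ?thesis by (simp add: LIM_zero_iff)
qed

lemma dseries_zero: "(\<And>j. 1 \<le> j \<Longrightarrow> b j = 0) \<Longrightarrow> dseries b s = 0"
proof -
  assume "\<And>j. 1 \<le> j \<Longrightarrow> b j = 0"
  then have "(\<lambda>n. b n * of_nat n powr (-s)) = (\<lambda>n. 0)"
    by (auto simp: fun_eq_iff)
  then show ?thesis by (simp add: dseries_def)
qed

lemma ilead:
  fixes b :: "nat \<Rightarrow> complex"
  assumes sb: "abss b" and K: "1 \<le> K"
    and lim: "((\<lambda>\<sigma>::real. of_real (real K powr \<sigma>) * dseries b (of_real \<sigma>)) \<longlongrightarrow> lam) at_top"
    and lam: "lam \<noteq> 0"
  shows "b K = lam" "\<And>j. 1 \<le> j \<Longrightarrow> j < K \<Longrightarrow> b j = 0"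
proof -
  have ex: "\<exists>j. 1 \<le> j \<and> b j \<noteq> 0"
  proof (rule ccontr)
    assume "\<not> ?thesis"
    then have "\<And>j. 1 \<le> j \<Longrightarrow> b j = 0" by auto
    then have "\<And>s. dseries b s = 0" by (rule dseries_zero)
    then have "((\<lambda>\<sigma>::real. 0) \<longlongrightarrow> lam) at_top" using lim by simp
    from tendsto_unique[OF trivial_limit_at_top_linorder this tendsto_const] lam show False by simp
  qed
  define l where "l = (LEAST j. 1 \<le> j \<and> b j \<noteq> 0)"
  have l1: "1 \<le> l" "b l \<noteq> 0" using LeastI_ex[OF ex] unfolding l_def by auto
  have lz: "\<And>j. 1 \<le> j \<Longrightarrow> j < l \<Longrightarrow> b j = 0" using not_less_Least unfolding l_def by blast
  have Ll: "((\<lambda>\<sigma>::real. of_real (real l powr \<sigma>) * dseries b (of_real \<sigma>)) \<longlongrightarrow> b l) at_top"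
    by (rule lead[OF sb l1(1) lz])
  have conv: "((\<lambda>\<sigma>::real. of_real (real p powr \<sigma>) * dseries b (of_real \<sigma>)) \<longlongrightarrow> 0) at_top"
    if p: "1 \<le> p" "p < q"
      and Lq: "((\<lambda>\<sigma>::real. of_real (real q powr \<sigma>) * dseries b (of_real \<sigma>)) \<longlongrightarrow> c) at_top"
    for p q c
  proof -
    have th: "0 < real p / real q" "real p / real q < 1" using p by auto
    have "((\<lambda>\<sigma>. of_real ((real p / real q) powr \<sigma>) * (of_real (real q powr \<sigma>) * dseries b (of_real \<sigma>))) \<longlongrightarrow> of_real 0 * c) at_top"
      by (intro tendsto_mult tendsto_of_real pw0 th Lq)
    moreover have "(real p / real q) powr \<sigma> * real q powr \<sigma> = real p powr \<sigma>" for \<sigma>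
      using p by (simp add: powr_divide)
    ultimately show ?thesis
      by (simp add: mult.assoc[symmetric] of_real_mult[symmetric] del: of_real_mult)
  qed
  have "l = K"
  proof (rule ccontr)
    assume "l \<noteq> K"
    then consider "l < K" | "K < l" by linarith
    then show False
    proof cases
      case 1
      have "((\<lambda>\<sigma>::real. of_real (real l powr \<sigma>) * dseries b (of_real \<sigma>)) \<longlongrightarrow> 0) at_top"
        by (rule conv[OF l1(1) 1 lim])
      from tendsto_unique[OF trivial_limit_at_top_linorder Ll this] l1(2) show False by simp
    next
      case 2
      have "((\<lambda>\<sigma>::real. of_real (real K powr \<sigma>) * dseries b (of_real \<sigma>)) \<longlongrightarrow> 0) at_top"
        by (rule conv[OF K 2 Ll])
      from tendsto_unique[OF trivial_limit_at_top_linorder lim this] lam show False by simp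
    qed
  qed
  from tendsto_unique[OF trivial_limit_at_top_linorder Ll] lim show "b K = lam" using \<open>l = K\<close> by simp
  show "\<And>j. 1 \<le> j \<Longrightarrow> j < K \<Longrightarrow> b j = 0" using lz \<open>l = K\<close> by blast
qed

lemma uniq:
  fixes b b' :: "nat \<Rightarrow> complex"
  assumes sb: "abss b" and sb': "abss b'" and z: "b 0 = b' 0"
    and ev: "\<And>\<sigma>. \<sigma> > \<sigma>0 \<Longrightarrow> dseries b (of_real \<sigma>) = dseries b' (of_real \<sigma>)"
  shows "b = b'"
proof (rule ccontr)
  assume ne: "b \<noteq> b'"
  define d where "d n = b n - b' n" for n
  have sd: "abss d" unfolding d_def by (rule abss_diff[OF sb sb'])
  have ex: "\<exists>j. 1 \<le> j \<and> d j \<noteq> 0"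
  proof (rule ccontr)
    assume a: "\<not> ?thesis"
    have "d j = 0" for j using a z by (cases "j = 0") (auto simp: d_def)
    then have "b = b'" by (auto simp: d_def fun_eq_iff)
    with ne show False by simp
  qed
  define l where "l = (LEAST j. 1 \<le> j \<and> d j \<noteq> 0)"
  have l1: "1 \<le> l" "d l \<noteq> 0" using LeastI_ex[OF ex] unfolding l_def by auto
  have lz: "\<And>j. 1 \<le> j \<Longrightarrow> j < l \<Longrightarrow> d j = 0" using not_less_Least unfolding l_def by blast
  have Ll: "((\<lambda>\<sigma>::real. of_real (real l powr \<sigma>) * dseries d (of_real \<sigma>)) \<longlongrightarrow> d l) at_top"
    by (rule lead[OF sd l1(1) lz])
  have "eventually (\<lambda>\<sigma>::real. of_real (real l powr \<sigma>) * dseries d (of_real \<sigma>) = 0) at_top"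
  proof (rule eventually_at_top_linorderI[of "max \<sigma>0 0 + 1"])
    fix \<sigma> :: real assume "max \<sigma>0 0 + 1 \<le> \<sigma>"
    then have "\<sigma> > \<sigma>0" "0 \<le> Re (of_real \<sigma>)" by auto
    then show "of_real (real l powr \<sigma>) * dseries d (of_real \<sigma>) = 0"
      unfolding d_def using dseries_diff[OF sb sb'] ev by simp
  qed
  then have "((\<lambda>\<sigma>::real. of_real (real l powr \<sigma>) * dseries d (of_real \<sigma>)) \<longlongrightarrow> 0) at_top"
    by (rule tendsto_eventually)
  from tendsto_unique[OF trivial_limit_at_top_linorder Ll this] l1(2) show False by simp
qed

definition rdx :: "(nat \<Rightarrow> nat) \<Rightarrow> (nat \<Rightarrow> complex) \<Rightarrow> nat \<Rightarrow> complex" where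
  "rdx g a j = (if j \<in> range g then a (inv g j) else 0)"

lemma rdx_g: "strict_mono g \<Longrightarrow> rdx g a (g n) = a n"
  unfolding rdx_def using strict_mono_imp_inj_on[of g UNIV] by (simp add: inv_f_f)

lemma rdx_off: "j \<notin> range g \<Longrightarrow> rdx g a j = 0"
  unfolding rdx_def by simp

lemma reidx_summable:
  fixes f :: "nat \<Rightarrow> 'a::real_normed_vector"
  assumes "strict_mono g" "\<And>j. j \<notin> range g \<Longrightarrow> f j = 0"
  shows "summable (\<lambda>n. f (g n)) \<longleftrightarrow> summable f"
proof
  assume "summable (\<lambda>n. f (g n))"
  then obtain c where "(\<lambda>n. f (g n)) sums c" by (auto simp: summable_def)
  then have "f sums c" using sums_mono_reindex[where f=f, OF assms] by simp
  then show "summable f" by (auto simp: summable_def)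
next
  assume "summable f"
  then obtain c where "f sums c" by (auto simp: summable_def)
  then have "(\<lambda>n. f (g n)) sums c" using sums_mono_reindex[where f=f, OF assms] by simp
  then show "summable (\<lambda>n. f (g n))" by (auto simp: summable_def)
qed

lemma reidx_suminf:
  fixes f :: "nat \<Rightarrow> 'a::real_normed_vector"
  assumes "strict_mono g" "\<And>j. j \<notin> range g \<Longrightarrow> f j = 0" "summable f"
  shows "suminf (\<lambda>n. f (g n)) = suminf f"
proof -
  have "f sums suminf f" using summable_sums[OF assms(3)] .
  then have "(\<lambda>n. f (g n)) sums suminf f" using sums_mono_reindex[where f=f, OF assms(1,2)] by simp
  then show ?thesis by (rule sums_unique[symmetric])
qed

lemma abss_rdx: assumes g: "strict_mono g" and a: "abss a" shows "abss (rdx g a)"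
proof -
  have "summable (\<lambda>n. norm (rdx g a (g n)))" using a by (simp add: rdx_g[OF g] abss_def)
  then show ?thesis unfolding abss_def
    using reidx_summable[OF g, of "\<lambda>j. norm (rdx g a j)"] by (simp add: rdx_off)
qed

lemma norm_rdx: assumes g: "strict_mono g" and a: "abss a"
  shows "(\<Sum>j. norm (rdx g a j)) = (\<Sum>n. norm (a n))"
proof -
  have "summable (\<lambda>j. norm (rdx g a j))" using abss_rdx[OF g a] by (simp add: abss_def)
  then have "(\<Sum>n. norm (rdx g a (g n))) = (\<Sum>j. norm (rdx g a j))"
    using reidx_suminf[OF g, of "\<lambda>j. norm (rdx g a j)"] by (simp add: rdx_off)
  then show ?thesis by (simp add: rdx_g[OF g])
qed

lemma dseries_rdx: assumes g: "strict_mono g" and a: "abss a" and s: "0 \<le> Re s"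
  shows "dseries (rdx g a) s = (\<Sum>n. a n * of_nat (g n) powr (-s))"
proof -
  have "summable (\<lambda>j. rdx g a j * of_nat j powr (-s))"
    using abss_term'[OF abss_rdx[OF g a] s] .
  then have "(\<Sum>n. rdx g a (g n) * of_nat (g n) powr (-s)) = (\<Sum>j. rdx g a j * of_nat j powr (-s))"
    using reidx_suminf[OF g, of "\<lambda>j. rdx g a j * of_nat j powr (-s)"] by (simp add: rdx_off)
  then show ?thesis by (simp add: rdx_g[OF g] dseries_def)
qed

lemma halfplane_real: "0 < \<sigma> \<Longrightarrow> complex_of_real \<sigma> \<in> halfplane 0"
  by (simp add: halfplane_def)

lemma Aplus_abss: "a \<in> Aplus \<Longrightarrow> abss a"
  by (simp add: Aplus_def abss_def)

lemma npow_pow: "0 < n \<Longrightarrow> (of_nat (n ^ c) :: complex) powr s = (of_nat n) powr (of_nat c * s)"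
proof -
  assume n: "0 < n"
  then have nc: "0 < n ^ c" by simp
  have "(of_nat (n ^ c) :: complex) powr s = exp (s * of_real (ln (real (n ^ c))))"
    by (rule npow[OF nc])
  also have "ln (real (n ^ c)) = real c * ln (real n)"
    using n by (simp add: ln_realpow)
  also have "exp (s * of_real (real c * ln (real n))) = (of_nat n :: complex) powr (of_nat c * s)"
    using n by (simp add: npow mult_ac)
  finally show ?thesis .
qed

lemma backward:
  fixes \<phi> :: "complex \<Rightarrow> complex"
  assumes c: "1 \<le> c" and ph: "\<forall>s\<in>halfplane 0. \<phi> s = of_nat c * s + \<i> * of_real \<tau>"
    and a: "a \<in> Aplus" and cr: "comp_rep \<phi> a b"
  shows "Aplus_norm b = Aplus_norm a"
proof -
  define g where "g (n::nat) = n ^ c" for n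
  have g: "strict_mono g" unfolding g_def strict_mono_def using c
    by (auto intro: power_strict_mono)
  define a' where "a' n = a n * (of_nat n :: complex) powr (- (\<i> * of_real \<tau>))" for n
  have na': "norm (a' n) = norm (a n)" for n
  proof (cases "n = 0")
    case True then show ?thesis using a by (simp add: a'_def Aplus_def)
  next
    case False then show ?thesis by (simp add: a'_def norm_mult norm_npow)
  qed
  have aa: "abss a" using a by (rule Aplus_abss)
  have aa': "abss a'" using aa by (simp add: abss_def na')
  have b: "abss b" "b 0 = 0" using cr by (auto simp: comp_rep_def Aplus_def abss_def)
  have eq: "b = rdx g a'"
  proof (rule uniq[OF b(1) abss_rdx[OF g aa'], of 0])
    have "g 0 = 0" using c by (simp add: g_def)
    then show "b 0 = rdx g a' 0" using rdx_g[OF g, of a' 0] b(2) by (simp add: a'_def)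
  next
    fix \<sigma> :: real assume s: "0 < \<sigma>"
    have "dseries b (of_real \<sigma>) = dseries a (\<phi> (of_real \<sigma>))"
      using cr halfplane_real[OF s] by (simp add: comp_rep_def)
    also have "\<phi> (of_real \<sigma>) = of_nat c * of_real \<sigma> + \<i> * of_real \<tau>"
      using ph halfplane_real[OF s] by simp
    also have "dseries a (of_nat c * of_real \<sigma> + \<i> * of_real \<tau>) = (\<Sum>n. a' n * of_nat (g n) powr (- of_real \<sigma>))"
      unfolding dseries_def
    proof (intro suminf_cong)
      fix n
      show "a n * of_nat n powr - (of_nat c * of_real \<sigma> + \<i> * of_real \<tau>) = a' n * of_nat (g n) powr - of_real \<sigma>"
      proof (cases "n = 0")
        case True then show ?thesis by (simp add: a'_def)
      next
        case False
        then have "of_nat (g n) powr (- of_real \<sigma>) = (of_nat n :: complex) powr (of_nat c * (- of_real \<sigma>))"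
          unfolding g_def by (intro npow_pow) simp
        then show ?thesis using False
          by (simp add: a'_def npow exp_add[symmetric] algebra_simps)
      qed
    qed
    also have "\<dots> = dseries (rdx g a') (of_real \<sigma>)"
      using dseries_rdx[OF g aa', of "of_real \<sigma>"] s by simp
    finally show "dseries b (of_real \<sigma>) = dseries (rdx g a') (of_real \<sigma>)" .
  qed
  have "Aplus_norm b = (\<Sum>j. norm (rdx g a' j))" by (simp add: Aplus_norm_def eq)
  also have "\<dots> = (\<Sum>n. norm (a' n))" by (rule norm_rdx[OF g aa'])
  also have "\<dots> = Aplus_norm a" by (simp add: Aplus_norm_def na')
  finally show ?thesis .
qed

lemma binom_poly_nz:
  fixes y :: "nat \<Rightarrow> complex"
  assumes "y c \<noteq> 0"
  shows "\<exists>k\<ge>k0. (\<Sum>i\<le>c. of_nat (k choose i) * y i) \<noteq> 0"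
  using assms
proof (induction c arbitrary: y k0)
  case 0
  then show ?case by auto
next
  case (Suc c)
  define y' where "y' i = y (Suc i)" for i
  have "y' c \<noteq> 0" using Suc.prems by (simp add: y'_def)
  then obtain k where k: "k \<ge> k0" "(\<Sum>i\<le>c. of_nat (k choose i) * y' i) \<noteq> 0"
    using Suc.IH by blast
  define G where "G k = (\<Sum>i\<le>Suc c. of_nat (k choose i) * y i)" for k
  have GS: "G (Suc k) = y 0 + (\<Sum>i\<le>c. of_nat (k choose i) * y' i + of_nat (k choose Suc i) * y' i)"
    unfolding G_def by (subst sum.atMost_Suc_shift) (simp add: y'_def algebra_simps)
  have G0: "G k = y 0 + (\<Sum>i\<le>c. of_nat (k choose Suc i) * y' i)"
    unfolding G_def by (subst sum.atMost_Suc_shift) (simp add: y'_def)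
  have "G (Suc k) - G k = (\<Sum>i\<le>c. of_nat (k choose i) * y' i)"
    unfolding GS G0 by (simp add: sum.distrib)
  then have "G (Suc k) \<noteq> 0 \<or> G k \<noteq> 0" using k(2) by auto
  then show ?case using k(1) unfolding G_def by (metis le_SucI)
qed

lemma cplx_disj:
  fixes u v :: complex
  assumes "norm (u + v) = norm u + norm v" "norm (u - v) = norm u + norm v"
  shows "u = 0 \<or> v = 0"
proof -
  have "inner u v = norm u * norm v"
    using dot_norm[of u v] assms(1) by (simp add: power2_eq_square algebra_simps)
  moreover have "inner u v = - (norm u * norm v)"
    using dot_norm_neg[of u v] assms(2) by (simp add: power2_eq_square algebra_simps)
  ultimately have "norm u * norm v = 0" by simp
  then show ?thesis by simp
qed

lemma psi_lim:
  assumes "\<psi> \<in> Dclass"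
  shows "\<exists>c1. ((\<lambda>\<sigma>::real. \<psi> (of_real \<sigma>)) \<longlongrightarrow> c1) at_top"
proof -
  obtain cc :: "nat \<Rightarrow> complex" and \<sigma>0 :: real where
    cs: "\<And>s. Re s > \<sigma>0 \<Longrightarrow> (\<lambda>n. cc n * (of_nat n) powr (- s)) sums \<psi> s"
    using assms unfolding Dclass_def by blast
  define \<sigma>1 where "\<sigma>1 = max \<sigma>0 0 + 1"
  have "summable (\<lambda>n. cc n * (of_nat n) powr (- of_real \<sigma>1))"
    using cs[of "of_real \<sigma>1"] unfolding \<sigma>1_def by (auto simp: sums_iff)
  then have "(\<lambda>n. cc n * (of_nat n) powr (- of_real \<sigma>1)) \<longlonglongrightarrow> 0"
    by (rule summable_LIMSEQ_zero)
  then have "Bseq (\<lambda>n. cc n * (of_nat n) powr (- of_real \<sigma>1))"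
    by (rule convergent_imp_Bseq[OF convergentI])
  then obtain K where K: "K > 0" "\<And>n. norm (cc n * (of_nat n) powr (- of_real \<sigma>1)) \<le> K"
    unfolding Bseq_def by blast
  define b' where "b' n = cc n * (of_nat n) powr (- of_real (\<sigma>1 + 2))" for n
  have nb: "norm (b' n) \<le> K * real n powr (-2)" for n
  proof (cases "n = 0")
    case True then show ?thesis by (simp add: b'_def)
  next
    case False
    have "b' n = (cc n * (of_nat n) powr (- of_real \<sigma>1)) * (of_nat n) powr (-2)"
      unfolding b'_def by (simp add: powr_add[symmetric] algebra_simps)
    then have "norm (b' n) = norm (cc n * (of_nat n) powr (- of_real \<sigma>1)) * real n powr (-2)"
      using False by (simp add: norm_mult norm_npow)
    also have "\<dots> \<le> K * real n powr (-2)" by (intro mult_right_mono K(2)) simp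
    finally show ?thesis .
  qed
  have sb: "abss b'" unfolding abss_def
  proof (rule summable_comparison_test')
    show "summable (\<lambda>n. K * real n powr (-2))"
      by (intro summable_mult) (simp add: summable_real_powr_iff)
    fix n :: nat show "norm (norm (b' n)) \<le> K * real n powr (-2)" using nb[of n] by simp
  qed
  have L: "((\<lambda>\<sigma>::real. of_real (real 1 powr \<sigma>) * dseries b' (of_real \<sigma>)) \<longlongrightarrow> b' 1) at_top"
    by (rule lead[OF sb]) auto
  have eq: "dseries b' (of_real \<sigma>) = \<psi> (of_real (\<sigma>1 + 2 + \<sigma>))" if "\<sigma> > 0" for \<sigma>
  proof -
    have "(\<lambda>n. cc n * (of_nat n) powr (- of_real (\<sigma>1 + 2 + \<sigma>))) sums \<psi> (of_real (\<sigma>1 + 2 + \<sigma>))"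
      using cs[of "of_real (\<sigma>1 + 2 + \<sigma>)"] that unfolding \<sigma>1_def by simp
    moreover have "(\<lambda>n. cc n * (of_nat n) powr (- of_real (\<sigma>1 + 2 + \<sigma>))) = (\<lambda>n. b' n * of_nat n powr (- of_real \<sigma>))"
      unfolding b'_def by (simp add: fun_eq_iff powr_add[symmetric] algebra_simps)
    ultimately show ?thesis unfolding dseries_def by (simp add: sums_iff)
  qed
  have "((\<lambda>\<sigma>::real. \<psi> (of_real (\<sigma>1 + 2 + \<sigma>))) \<longlongrightarrow> b' 1) at_top"
  proof (rule Lim_transform_eventually[OF L])
    show "eventually (\<lambda>\<sigma>::real. of_real (real 1 powr \<sigma>) * dseries b' (of_real \<sigma>) = \<psi> (of_real (\<sigma>1 + 2 + \<sigma>))) at_top"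
      using eq by (intro eventually_at_top_linorderI[of 1]) auto
  qed
  then have "((\<lambda>\<sigma>::real. \<psi> (of_real (\<sigma>1 + 2 + (-(\<sigma>1 + 2) + \<sigma>)))) \<longlongrightarrow> b' 1) at_top"
    by (rule filterlim_compose) (rule filterlim_tendsto_add_at_top[OF tendsto_const filterlim_ident])
  then show ?thesis by auto
qed

lemma Bprop:
  assumes cr: "comp_rep \<phi> (delta m) b" and mp: "\<phi> ` halfplane 0 \<subseteq> halfplane 0"
  shows "abss b" "b 0 = 0" "\<And>s. s \<in> halfplane 0 \<Longrightarrow> dseries b s = of_nat m powr (-(\<phi> s))"
  using cr by (auto simp: comp_rep_def Aplus_def abss_def dseries_delta)

lemma delta_Aplus: "1 \<le> k \<Longrightarrow> delta k \<in> Aplus"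
  using abss_delta[of k] by (simp add: Aplus_def abss_def delta_def)

lemma norm_delta: "Aplus_norm (delta k) = 1"
proof -
  have "(\<lambda>n. norm (delta k n)) = (\<lambda>n. if n = k then 1 else 0)"
    by (simp add: fun_eq_iff delta_def)
  then show ?thesis unfolding Aplus_norm_def
    using sums_single[of k "\<lambda>_. 1::real"] by (simp add: sums_iff)
qed

lemma hp_re: "s \<in> halfplane 0 \<Longrightarrow> 0 \<le> Re s"
  by (simp add: halfplane_def)

lemma iso_disj:
  assumes crn: "comp_rep \<phi> (delta n) x" and crm: "comp_rep \<phi> (delta m) y"
    and mp: "\<phi> ` halfplane 0 \<subseteq> halfplane 0"
    and iso: "\<forall>a\<in>Aplus. \<forall>b. comp_rep \<phi> a b \<longrightarrow> Aplus_norm b = Aplus_norm a"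
    and nm: "n \<noteq> m" "1 \<le> n" "1 \<le> m"
  shows "x j = 0 \<or> y j = 0"
proof -
  note X = Bprop[OF crn mp] and Y = Bprop[OF crm mp]
  have nx: "Aplus_norm x = 1" using iso delta_Aplus[OF nm(2)] crn norm_delta by auto
  have ny: "Aplus_norm y = 1" using iso delta_Aplus[OF nm(3)] crm norm_delta by auto
  have combo: "Aplus_norm (\<lambda>k. x k + e * y k) = 2" if e: "norm e = 1" for e :: complex
  proof -
    define f where "f k = delta n k + e * delta m k" for k
    have fA: "f \<in> Aplus"
      using abss_add[OF abss_delta abss_cmult[OF abss_delta]] nm
      by (simp add: Aplus_def abss_def f_def delta_def)
    have cr: "comp_rep \<phi> f (\<lambda>k. x k + e * y k)"
      unfolding comp_rep_def
    proof
      show "(\<lambda>k. x k + e * y k) \<in> Aplus"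
        using abss_add[OF X(1) abss_cmult[OF Y(1)]] X(2) Y(2) by (simp add: Aplus_def abss_def)
      show "\<forall>s\<in>halfplane 0. dseries f (\<phi> s) = dseries (\<lambda>k. x k + e * y k) s"
      proof
        fix s assume s: "s \<in> halfplane 0"
        then have ps: "0 \<le> Re (\<phi> s)" using mp hp_re by blast
        have "dseries f (\<phi> s) = dseries (delta n) (\<phi> s) + e * dseries (delta m) (\<phi> s)"
          unfolding f_def
          by (simp add: dseries_add[OF abss_delta abss_cmult[OF abss_delta] ps] dseries_cmult[OF abss_delta ps])
        also have "\<dots> = dseries x s + e * dseries y s"
          using X(3)[OF s] Y(3)[OF s] by (simp add: dseries_delta)
        also have "\<dots> = dseries (\<lambda>k. x k + e * y k) s"
          using hp_re[OF s]
          by (simp add: dseries_add[OF X(1) abss_cmult[OF Y(1)]] dseries_cmult[OF Y(1)])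
        finally show "dseries f (\<phi> s) = dseries (\<lambda>k. x k + e * y k) s" .
      qed
    qed
    have "(\<lambda>k. norm (f k)) = (\<lambda>k. (if k = n then 1 else 0) + (if k = m then 1 else 0))"
      using nm(1) e by (auto simp: fun_eq_iff f_def delta_def)
    moreover have "(\<lambda>k. (if k = n then 1 else 0) + (if k = m then 1 else 0)) sums (1 + 1 :: real)"
      by (intro sums_add) (use sums_single[of n "\<lambda>_. 1::real"] sums_single[of m "\<lambda>_. 1::real"] in simp_all)
    ultimately have "Aplus_norm f = 2" unfolding Aplus_norm_def by (simp add: sums_iff)
    then show ?thesis using iso fA cr by auto
  qed
  have zero: "norm (x k + e * y k) = norm (x k) + norm (y k)" if e: "norm e = 1" for e :: complex and k
  proof -
    define t where "t k = norm (x k) + norm (y k) - norm (x k + e * y k)" for k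
    have sx: "summable (\<lambda>k. norm (x k))" using X(1) by (simp add: abss_def)
    have sy: "summable (\<lambda>k. norm (y k))" using Y(1) by (simp add: abss_def)
    have sxy: "summable (\<lambda>k. norm (x k + e * y k))"
      using abss_add[OF X(1) abss_cmult[OF Y(1)]] by (simp add: abss_def)
    have st: "summable t" unfolding t_def by (intro summable_diff summable_add sx sy sxy)
    have "suminf t = Aplus_norm x + Aplus_norm y - Aplus_norm (\<lambda>k. x k + e * y k)"
      unfolding t_def Aplus_norm_def
      by (simp add: suminf_diff[OF summable_add[OF sx sy] sxy] suminf_add[OF sx sy])
    then have "suminf t = 0" using nx ny combo[OF e] by simp
    moreover have "\<And>k. 0 \<le> t k" unfolding t_def using e
      by (simp add: norm_mult) (metis norm_mult mult_1 norm_triangle_ineq)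
    ultimately have "\<forall>k. t k = 0" using suminf_eq_zero_iff[OF st] by blast
    then show ?thesis unfolding t_def by (simp add: algebra_simps)
  qed
  have "norm (x j + y j) = norm (x j) + norm (y j)" using zero[of 1 j] by simp
  moreover have "norm (x j - y j) = norm (x j) + norm (y j)" using zero[of "-1" j] by simp
  ultimately show ?thesis by (rule cplx_disj)
qed

lemma pw_id:
  assumes m: "0 < m"
  shows "of_real (real (m ^ c) powr \<sigma>) * (of_nat m :: complex) powr (-(of_nat c * of_real \<sigma> + w))
         = of_nat m powr (-w)"
proof -
  have "real (m ^ c) powr \<sigma> = exp (\<sigma> * (real c * ln (real m)))"
    using m by (simp add: powr_def ln_realpow)
  then have "of_real (real (m ^ c) powr \<sigma>) = exp (of_real \<sigma> * (of_nat c * of_real (ln (real m))) :: complex)"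
    by (simp only: of_real_exp) simp
  then show ?thesis using m
    by (simp add: npow exp_add[symmetric] algebra_simps)
qed

lemma lead_B:
  assumes cr: "comp_rep \<phi> (delta m) b" and mp: "\<phi> ` halfplane 0 \<subseteq> halfplane 0" and m: "1 \<le> m"
    and ph: "\<forall>s\<in>halfplane 0. \<phi> s = of_nat c * s + \<psi> s"
    and lim: "((\<lambda>\<sigma>::real. \<psi> (of_real \<sigma>)) \<longlongrightarrow> c1) at_top"
  shows "b (m ^ c) = of_nat m powr (-c1)" "\<And>j. 1 \<le> j \<Longrightarrow> j < m ^ c \<Longrightarrow> b j = 0"
proof -
  note B = Bprop[OF cr mp]
  have m0: "0 < m" using m by simp
  have L1: "((\<lambda>\<sigma>::real. exp (- \<psi> (of_real \<sigma>) * of_real (ln (real m)))) \<longlongrightarrow> exp (- c1 * of_real (ln (real m)))) at_top"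
    by (intro tendsto_exp tendsto_mult tendsto_minus lim tendsto_const)
  have L2: "((\<lambda>\<sigma>::real. of_real (real (m ^ c) powr \<sigma>) * dseries b (of_real \<sigma>)) \<longlongrightarrow> of_nat m powr (-c1)) at_top"
  proof (rule Lim_transform_eventually)
    show "((\<lambda>\<sigma>::real. exp (- \<psi> (of_real \<sigma>) * of_real (ln (real m)))) \<longlongrightarrow> of_nat m powr (-c1)) at_top"
      using L1 m0 by (simp add: npow)
    show "eventually (\<lambda>\<sigma>::real. exp (- \<psi> (of_real \<sigma>) * of_real (ln (real m))) = of_real (real (m ^ c) powr \<sigma>) * dseries b (of_real \<sigma>)) at_top"
    proof (rule eventually_at_top_linorderI[of 1])
      fix \<sigma> :: real assume "1 \<le> \<sigma>"
      then have s: "of_real \<sigma> \<in> halfplane 0" by (simp add: halfplane_def)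
      have "of_real (real (m ^ c) powr \<sigma>) * dseries b (of_real \<sigma>)
            = of_real (real (m ^ c) powr \<sigma>) * (of_nat m :: complex) powr (-(of_nat c * of_real \<sigma> + \<psi> (of_real \<sigma>)))"
        using B(3)[OF s] ph s by simp
      also have "\<dots> = of_nat m powr (- \<psi> (of_real \<sigma>))" by (rule pw_id[OF m0])
      finally show "exp (- \<psi> (of_real \<sigma>) * of_real (ln (real m))) = of_real (real (m ^ c) powr \<sigma>) * dseries b (of_real \<sigma>)"
        using m0 by (simp add: npow)
    qed
  qed
  have ne: "(of_nat m :: complex) powr (-c1) \<noteq> 0" using m by simp
  have K: "1 \<le> m ^ c" using m by simp
  show "b (m ^ c) = of_nat m powr (-c1)" by (rule ilead(1)[OF B(1) K L2 ne])
  show "\<And>j. 1 \<le> j \<Longrightarrow> j < m ^ c \<Longrightarrow> b j = 0" by (rule ilead(2)[OF B(1) K L2 ne])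
qed

definition shf :: "nat \<Rightarrow> (nat \<Rightarrow> complex) \<Rightarrow> nat \<Rightarrow> complex" where
  "shf K b n = (if K dvd n then b (n div K) else 0)"

lemma sm_mult: "1 \<le> K \<Longrightarrow> strict_mono (\<lambda>n::nat. K * n)"
  by (auto simp: strict_mono_def)

lemma shf_rdx: assumes K: "1 \<le> K" shows "shf K b = rdx (\<lambda>n. K * n) b"
proof
  fix j
  show "shf K b j = rdx (\<lambda>n. K * n) b j"
  proof (cases "K dvd j")
    case True
    then obtain q where q: "j = K * q" by (auto simp: dvd_def)
    have "rdx (\<lambda>n. K * n) b (K * q) = b q" by (rule rdx_g[OF sm_mult[OF K]])
    then show ?thesis using q K by (simp add: shf_def)
  next
    case False
    then have "j \<notin> range (\<lambda>n. K * n)" by auto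
    then show ?thesis using False by (simp add: shf_def rdx_off)
  qed
qed

lemma abss_shf: "1 \<le> K \<Longrightarrow> abss b \<Longrightarrow> abss (shf K b)"
  using abss_rdx[OF sm_mult] shf_rdx by metis

lemma npow_mult: "(of_nat (K * n) :: complex) powr s = of_nat K powr s * of_nat n powr s"
proof (cases "K = 0 \<or> n = 0")
  case True then show ?thesis by auto
next
  case False
  then have p: "0 < K" "0 < n" "0 < K * n" by auto
  have "(of_nat (K * n) :: complex) powr s = exp (s * of_real (ln (real (K * n))))"
    by (rule npow[OF p(3)])
  also have "ln (real (K * n)) = ln (real K) + ln (real n)"
    using p by (simp add: ln_mult)
  also have "exp (s * of_real (ln (real K) + ln (real n))) = of_nat K powr s * of_nat n powr s"
    using p by (simp add: npow exp_add[symmetric] algebra_simps)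
  finally show ?thesis .
qed

lemma dseries_shf:
  assumes K: "1 \<le> K" and b: "abss b" and s: "0 \<le> Re s"
  shows "dseries (shf K b) s = of_nat K powr (-s) * dseries b s"
proof -
  have "dseries (shf K b) s = (\<Sum>n. b n * of_nat (K * n) powr (-s))"
    unfolding shf_rdx[OF K] by (rule dseries_rdx[OF sm_mult[OF K] b s])
  also have "\<dots> = (\<Sum>n. of_nat K powr (-s) * (b n * of_nat n powr (-s)))"
    unfolding npow_mult by (simp add: mult_ac)
  also have "\<dots> = of_nat K powr (-s) * dseries b s"
    unfolding dseries_def by (rule suminf_mult[OF abss_term'[OF b s]])
  finally show ?thesis .
qed

lemma shf0: "shf K b 0 = b 0"
  by (simp add: shf_def)

lemma shf1: "shf 1 b = b"
  by (simp add: shf_def fun_eq_iff)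

lemma shf1': "shf (Suc 0) b = b"
  by (simp add: shf_def fun_eq_iff)

lemma shf_cancel: assumes "1 \<le> L" shows "shf (L ^ e * K) b (L ^ e * N) = shf K b N"
proof -
  have ne: "L ^ e \<noteq> 0" using assms by simp
  have d: "L ^ e * K dvd L ^ e * N \<longleftrightarrow> K dvd N" using assms by simp
  have q: "(L ^ e * N) div (L ^ e * K) = N div K" using assms by simp
  show ?thesis unfolding shf_def d q ..
qed

lemma npow_pow2: "0 < L \<Longrightarrow> (of_nat (L ^ e) :: complex) powr s = (of_nat L powr s) ^ e"
proof -
  assume L: "0 < L"
  then have "0 < L ^ e" by simp
  then have "(of_nat (L ^ e) :: complex) powr s = exp (s * of_real (ln (real (L ^ e))))" by (rule npow)
  also have "\<dots> = exp (of_nat e * (s * of_real (ln (real L))))"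
    using L by (simp add: ln_realpow mult_ac)
  also have "\<dots> = (of_nat L powr s) ^ e"
    using L by (simp add: exp_of_nat_mult npow)
  finally show ?thesis .
qed

lemma realpow_powr: "(real M ^ i) powr \<sigma> = (real M powr \<sigma>) ^ i"
  by (induction i) (simp_all add: powr_mult)

lemma expansion:
  fixes u :: "nat \<Rightarrow> complex" and P :: "nat \<Rightarrow> nat \<Rightarrow> complex"
  assumes au: "abss u" and u0: "u 0 = 0"
    and L: "1 \<le> L" and uL: "u L \<noteq> 0" and uz: "\<And>j. 1 \<le> j \<Longrightarrow> j < L \<Longrightarrow> u j = 0"
    and LM: "L < M" and uM: "u M \<noteq> 0" and uz2: "\<And>j. L < j \<Longrightarrow> j < M \<Longrightarrow> u j = 0"
    and aP: "\<And>k. abss (P k)" and P0: "\<And>k. P k 0 = 0"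
    and dP: "\<And>k \<sigma>. 0 < \<sigma> \<Longrightarrow> dseries (P k) (of_real \<sigma>) = dseries u (of_real \<sigma>) ^ k"
    and c: "1 \<le> c"
  shows "\<exists>k\<ge>c. P k (L ^ (k - c) * M ^ c) \<noteq> 0"
proof -
  define a where "a = u L"
  define \<beta> where "\<beta> = u M"
  have a0: "a \<noteq> 0" using uL by (simp add: a_def)
  have \<beta>0: "\<beta> \<noteq> 0" using uM by (simp add: \<beta>_def)
  define r where "r n = u n - a * delta L n" for n
  have ar: "abss r" unfolding r_def by (intro abss_diff au abss_cmult abss_delta)
  have rz: "r j = 0" if "1 \<le> j" "j < M" for j
  proof (cases "j = L")
    case True then show ?thesis by (simp add: r_def a_def delta_def)
  next
    case False
    have "u j = 0"
    proof (cases "j < L")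
      case True then show ?thesis using uz that by simp
    next
      case False then show ?thesis using uz2 that \<open>j \<noteq> L\<close> by simp
    qed
    then show ?thesis using False by (simp add: r_def delta_def)
  qed
  have rM: "r M = \<beta>" using LM by (simp add: r_def \<beta>_def delta_def)
  have M1: "1 \<le> M" using L LM by simp
  have L0: "0 < L" using L by simp
  have dr: "dseries r s = dseries u s - a * of_nat L powr (-s)" if "0 \<le> Re s" for s
    unfolding r_def
    by (simp add: dseries_diff[OF au abss_cmult[OF abss_delta] that] dseries_cmult[OF abss_delta that] dseries_delta)
  have Lr: "((\<lambda>\<sigma>::real. of_real (real M powr \<sigma>) * dseries r (of_real \<sigma>)) \<longlongrightarrow> \<beta>) at_top"
    using lead[OF ar M1 rz] rM by simp
  have L1': "1 \<le> L ^ e" for e using L by simp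
  define R where "R i n = (\<Sum>j\<le>i. of_nat (i choose j) * (-a) ^ (i - j) * shf (L ^ (i - j)) (P j) n)" for i n
  have tA: "abss (\<lambda>n. of_nat (i choose j) * (-a) ^ (i - j) * shf (L ^ (i - j)) (P j) n)" for i j
    by (intro abss_cmult abss_shf[OF L1'] aP)
  have aR: "abss (R i)" for i
    unfolding R_def by (intro abss_sum finite_atMost tA)
  have R0: "R i 0 = 0" for i unfolding R_def by (simp add: shf0 P0)
  have dR: "dseries (R i) (of_real \<sigma>) = dseries r (of_real \<sigma>) ^ i" if sp: "0 < \<sigma>" for i \<sigma>
  proof -
    have s: "0 \<le> Re (of_real \<sigma> :: complex)" using sp by simp
    have "dseries (R i) (of_real \<sigma>) = (\<Sum>j\<le>i. dseries (\<lambda>n. of_nat (i choose j) * (-a) ^ (i - j) * shf (L ^ (i - j)) (P j) n) (of_real \<sigma>))"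
      unfolding R_def by (rule dseries_sum[OF finite_atMost tA s])
    also have "\<dots> = (\<Sum>j\<le>i. of_nat (i choose j) * (-a) ^ (i - j) * (of_nat (L ^ (i - j)) powr (- of_real \<sigma>) * dseries (P j) (of_real \<sigma>)))"
      by (simp add: dseries_cmult[OF abss_shf[OF L1' aP] s] dseries_shf[OF L1' aP s])
    also have "\<dots> = (\<Sum>j\<le>i. of_nat (i choose j) * dseries u (of_real \<sigma>) ^ j * (- a * of_nat L powr (- of_real \<sigma>)) ^ (i - j))"
      by (rule sum.cong[OF refl]) (simp only: dP[OF sp] npow_pow2[OF L0] power_mult_distrib mult_ac)
    also have "\<dots> = (dseries u (of_real \<sigma>) + (- a * of_nat L powr (- of_real \<sigma>))) ^ i"
      by (rule binomial_ring[symmetric])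
    also have "\<dots> = dseries r (of_real \<sigma>) ^ i" using dr[OF s] by simp
    finally show ?thesis .
  qed
  have LR: "((\<lambda>\<sigma>::real. of_real (real (M ^ i) powr \<sigma>) * dseries (R i) (of_real \<sigma>)) \<longlongrightarrow> \<beta> ^ i) at_top" for i
  proof (rule Lim_transform_eventually)
    show "((\<lambda>\<sigma>::real. (of_real (real M powr \<sigma>) * dseries r (of_real \<sigma>)) ^ i) \<longlongrightarrow> \<beta> ^ i) at_top"
      by (rule tendsto_power[OF Lr])
    show "eventually (\<lambda>\<sigma>::real. (of_real (real M powr \<sigma>) * dseries r (of_real \<sigma>)) ^ i = of_real (real (M ^ i) powr \<sigma>) * dseries (R i) (of_real \<sigma>)) at_top"
      by (intro eventually_at_top_linorderI[of 1]) (simp add: dR realpow_powr power_mult_distrib)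
  qed
  have Mi: "1 \<le> M ^ i" for i using M1 by simp
  have bi: "\<beta> ^ i \<noteq> 0" for i using \<beta>0 by simp
  have RM: "R i (M ^ i) = \<beta> ^ i" for i by (rule ilead(1)[OF aR Mi LR bi])
  have Rz: "R i j = 0" if "1 \<le> j" "j < M ^ i" for i j by (rule ilead(2)[OF aR Mi LR bi that])
  have dtail: "dseries u s = dseries r s + a * of_nat L powr (-s)" if "0 \<le> Re s" for s
    using dr[OF that] by simp
  have tB: "abss (\<lambda>n. of_nat (k choose i) * a ^ (k - i) * shf (L ^ (k - i)) (R i) n)" for k i
    by (intro abss_cmult abss_shf[OF L1'] aR)
  have expP: "P k = (\<lambda>n. \<Sum>i\<le>k. of_nat (k choose i) * a ^ (k - i) * shf (L ^ (k - i)) (R i) n)" for k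
  proof -
  have aS: "abss (\<lambda>n. \<Sum>i\<le>k. of_nat (k choose i) * a ^ (k - i) * shf (L ^ (k - i)) (R i) n)"
    by (intro abss_sum finite_atMost tB)
  show ?thesis
  proof (rule uniq[OF aP[of k] aS, of 0])
    show "P k 0 = (\<Sum>i\<le>k. of_nat (k choose i) * a ^ (k - i) * shf (L ^ (k - i)) (R i) 0)"
      by (simp add: P0 shf0 R0)
  next
    fix \<sigma> :: real assume sp: "0 < \<sigma>"
    have s: "0 \<le> Re (of_real \<sigma> :: complex)" using sp by simp
    have "dseries (P k) (of_real \<sigma>) = (dseries r (of_real \<sigma>) + a * of_nat L powr (- of_real \<sigma>)) ^ k"
      using dP[OF sp] dtail[OF s] by simp
    also have "\<dots> = (\<Sum>i\<le>k. of_nat (k choose i) * dseries r (of_real \<sigma>) ^ i * (a * of_nat L powr (- of_real \<sigma>)) ^ (k - i))"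
      by (rule binomial_ring)
    also have "\<dots> = (\<Sum>i\<le>k. of_nat (k choose i) * a ^ (k - i) * (of_nat (L ^ (k - i)) powr (- of_real \<sigma>) * dseries (R i) (of_real \<sigma>)))"
      by (rule sum.cong[OF refl]) (simp only: dR[OF sp] npow_pow2[OF L0] power_mult_distrib mult_ac)
    also have "\<dots> = (\<Sum>i\<le>k. dseries (\<lambda>n. of_nat (k choose i) * a ^ (k - i) * shf (L ^ (k - i)) (R i) n) (of_real \<sigma>))"
      by (simp add: dseries_cmult[OF abss_shf[OF L1' aR] s] dseries_shf[OF L1' aR s])
    also have "\<dots> = dseries (\<lambda>n. \<Sum>i\<le>k. of_nat (k choose i) * a ^ (k - i) * shf (L ^ (k - i)) (R i) n) (of_real \<sigma>)"
      by (rule dseries_sum[OF finite_atMost tB s, symmetric])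
    finally show "dseries (P k) (of_real \<sigma>) = dseries (\<lambda>n. \<Sum>i\<le>k. of_nat (k choose i) * a ^ (k - i) * shf (L ^ (k - i)) (R i) n) (of_real \<sigma>)" .
  qed
  qed
  define \<gamma> where "\<gamma> i = shf (L ^ (c - i)) (R i) (M ^ c)" for i
  have evalP: "P k (L ^ (k - c) * M ^ c) = (\<Sum>i\<le>c. of_nat (k choose i) * a ^ (k - i) * \<gamma> i)" if ck: "c \<le> k" for k
  proof -
    define T where "T i = of_nat (k choose i) * a ^ (k - i) * shf (L ^ (k - i)) (R i) (L ^ (k - c) * M ^ c)" for i
    have "P k (L ^ (k - c) * M ^ c) = (\<Sum>i\<le>k. T i)"
      unfolding T_def by (subst expP) simp
    also have "{..k} = {..c} \<union> {c<..k}" using ck by auto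
    also have "sum T ({..c} \<union> {c<..k}) = sum T {..c} + sum T {c<..k}"
      by (rule sum.union_disjoint) auto
    also have "sum T {c<..k} = 0"
    proof (rule sum.neutral, rule ballI)
      fix i assume i: "i \<in> {c<..k}"
      have e1: "L ^ (k - c) * M ^ c = L ^ (k - i) * (L ^ (i - c) * M ^ c)"
        using i by (simp add: power_add[symmetric] mult.assoc[symmetric])
      have "shf (L ^ (k - i)) (R i) (L ^ (k - c) * M ^ c) = shf (L ^ (k - i) * 1) (R i) (L ^ (k - i) * (L ^ (i - c) * M ^ c))"
        by (simp only: e1 mult_1_right)
      also have "\<dots> = shf 1 (R i) (L ^ (i - c) * M ^ c)" by (rule shf_cancel[OF L])
      also have "\<dots> = R i (L ^ (i - c) * M ^ c)" by (simp add: shf1 shf1')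
      also have "\<dots> = 0"
      proof (rule Rz)
        show "1 \<le> L ^ (i - c) * M ^ c" using L M1 by simp
        have "L ^ (i - c) < M ^ (i - c)" using i LM by (intro power_strict_mono) auto
        then have "L ^ (i - c) * M ^ c < M ^ (i - c) * M ^ c" using M1 by simp
        also have "M ^ (i - c) * M ^ c = M ^ i" using i by (simp add: power_add[symmetric])
        finally show "L ^ (i - c) * M ^ c < M ^ i" .
      qed
      finally show "T i = 0" by (simp add: T_def)
    qed
    also have "sum T {..c} = (\<Sum>i\<le>c. of_nat (k choose i) * a ^ (k - i) * \<gamma> i)"
    proof (rule sum.cong[OF refl])
      fix i assume i: "i \<in> {..c}"
      have e2: "L ^ (k - i) = L ^ (k - c) * L ^ (c - i)" using i ck by (simp add: power_add[symmetric])
      have "shf (L ^ (k - i)) (R i) (L ^ (k - c) * M ^ c) = shf (L ^ (c - i)) (R i) (M ^ c)"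
        unfolding e2 by (rule shf_cancel[OF L])
      then show "T i = of_nat (k choose i) * a ^ (k - i) * \<gamma> i" by (simp add: T_def \<gamma>_def)
    qed
    finally show ?thesis by simp
  qed
  have \<gamma>c: "\<gamma> c = \<beta> ^ c" by (simp add: \<gamma>_def shf1 shf1' RM)
  define y where "y i = \<gamma> i / a ^ i" for i
  have "y c \<noteq> 0" using \<gamma>c \<beta>0 a0 by (simp add: y_def)
  then obtain k where k: "k \<ge> c" "(\<Sum>i\<le>c. of_nat (k choose i) * y i) \<noteq> 0"
    using binom_poly_nz by blast
  have "P k (L ^ (k - c) * M ^ c) = (\<Sum>i\<le>c. of_nat (k choose i) * a ^ (k - i) * \<gamma> i)"
    by (rule evalP[OF k(1)])
  also have "\<dots> = (\<Sum>i\<le>c. a ^ k * (of_nat (k choose i) * y i))"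
  proof (rule sum.cong[OF refl])
    fix i assume "i \<in> {..c}"
    then have "i \<le> k" using k by simp
    then have "a ^ (k - i) = a ^ k / a ^ i" using a0 by (simp add: power_diff)
    then show "of_nat (k choose i) * a ^ (k - i) * \<gamma> i = a ^ k * (of_nat (k choose i) * y i)"
      using a0 by (simp add: y_def field_simps)
  qed
  also have "\<dots> = a ^ k * (\<Sum>i\<le>c. of_nat (k choose i) * y i)" by (simp add: sum_distrib_left)
  finally have "P k (L ^ (k - c) * M ^ c) \<noteq> 0" using k(2) a0 by simp
  then show ?thesis using k(1) by blast
qed

lemma phi_form:
  fixes \<phi> :: "complex \<Rightarrow> complex" and a :: complex
  assumes hol: "\<phi> holomorphic_on halfplane 0"
    and eq: "\<And>s. s \<in> halfplane 0 \<Longrightarrow> exp (- \<phi> s * of_real (ln 2)) = a * exp (- s * of_real (ln 2)) ^ c0"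
    and na: "norm a = 1"
  shows "\<exists>\<tau>::real. \<forall>s\<in>halfplane 0. \<phi> s = of_nat c0 * s + \<i> * of_real \<tau>"
proof -
  define l :: real where "l = ln 2"
  have l0: "0 < l" by (simp add: l_def)
  define g where "g s = \<phi> s - of_nat c0 * s" for s
  have ge: "exp (- g s * of_real l) = a" if s: "s \<in> halfplane 0" for s
  proof -
    have E: "exp (- s * of_real l) ^ c0 = exp (of_nat c0 * (- s * of_real l))"
      by (rule exp_of_nat_mult[symmetric])
    have "- g s * of_real l = (- \<phi> s * of_real l) - of_nat c0 * (- s * of_real l)"
      by (simp add: g_def algebra_simps)
    then have "exp (- g s * of_real l) = exp ((- \<phi> s * of_real l) - of_nat c0 * (- s * of_real l))"
      by (simp only:)
    also have "\<dots> = exp (- \<phi> s * of_real l) / exp (of_nat c0 * (- s * of_real l))"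
      by (rule exp_diff)
    also have "\<dots> = a" using eq[OF s] E by (simp add: l_def)
    finally show ?thesis .
  qed
  have S: "connected (halfplane 0)" unfolding halfplane_def by (rule connected_halfspace_Re_gt)
  have cg: "continuous_on (halfplane 0) g"
    unfolding g_def by (intro continuous_on_diff holomorphic_on_imp_continuous_on[OF hol] continuous_intros)
  have "g constant_on halfplane 0"
  proof (rule continuous_discrete_range_constant[OF S cg])
    fix x assume x: "x \<in> halfplane 0"
    show "\<exists>e>0. \<forall>y. y \<in> halfplane 0 \<and> g y \<noteq> g x \<longrightarrow> e \<le> norm (g y - g x)"
    proof (intro exI[of _ "2 * pi / l"] conjI allI impI)
      show "0 < 2 * pi / l" using l0 by simp
      fix y assume y: "y \<in> halfplane 0 \<and> g y \<noteq> g x"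
      define w where "w = - g y * of_real l"
      define z where "z = - g x * of_real l"
      have ewz: "exp w = exp z" using ge x y by (simp add: w_def z_def)
      have "w \<noteq> z" using y l0 by (simp add: w_def z_def)
      then have "\<not> \<bar>Im w - Im z\<bar> < 2 * pi" using exp_complex_eqI ewz by blast
      then have "2 * pi \<le> \<bar>Im (w - z)\<bar>" by simp
      also have "\<dots> \<le> norm (w - z)" by (rule abs_Im_le_cmod)
      also have "w - z = - (g y - g x) * of_real l" by (simp add: w_def z_def algebra_simps)
      also have "norm \<dots> = norm (g y - g x) * l" using l0 by (simp add: norm_mult norm_minus_commute)
      finally show "2 * pi / l \<le> norm (g y - g x)" using l0 by (simp add: field_simps)
    qed
  qed
  then obtain g0 where g0: "\<And>s. s \<in> halfplane 0 \<Longrightarrow> g s = g0" unfolding constant_on_def by blast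
  have one: "1 \<in> halfplane 0" by (simp add: halfplane_def)
  have "exp (- g0 * of_real l) = a" using ge[OF one] g0[OF one] by simp
  then have "exp (Re (- g0 * of_real l)) = 1" using na by (metis norm_exp_eq_Re)
  then have "Re g0 = 0" using l0 by simp
  then have g0i: "g0 = \<i> * of_real (Im g0)" by (simp add: complex_eq_iff)
  show ?thesis
  proof (intro exI[of _ "Im g0"] ballI)
    fix s assume s: "s \<in> halfplane 0"
    have "\<phi> s = of_nat c0 * s + g s" by (simp add: g_def)
    then show "\<phi> s = of_nat c0 * s + \<i> * of_real (Im g0)" using g0[OF s] g0i by simp
  qed
qed

lemma forward:
  fixes \<phi> \<psi> :: "complex \<Rightarrow> complex" and c0 :: nat
  assumes hol: "\<phi> holomorphic_on halfplane 0"
    and mp: "\<phi> ` halfplane 0 \<subseteq> halfplane 0"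
    and psi: "\<psi> \<in> Dclass"
    and ph: "\<forall>s\<in>halfplane 0. \<phi> s = of_nat c0 * s + \<psi> s"
    and ex: "\<forall>a\<in>Aplus. \<exists>b. comp_rep \<phi> a b"
    and iso: "\<forall>a\<in>Aplus. \<forall>b. comp_rep \<phi> a b \<longrightarrow> Aplus_norm b = Aplus_norm a"
  shows "c0 \<ge> 1 \<and> (\<exists>\<tau>::real. \<forall>s\<in>halfplane 0. \<phi> s = of_nat c0 * s + \<i> * of_real \<tau>)"
proof -
  obtain c1 where lim: "((\<lambda>\<sigma>::real. \<psi> (of_real \<sigma>)) \<longlongrightarrow> c1) at_top"
    using psi_lim[OF psi] by blast
  define B where "B m = (SOME b. comp_rep \<phi> (delta m) b)" for m
  have crB: "comp_rep \<phi> (delta m) (B m)" if m: "1 \<le> m" for m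
  proof -
    have "\<exists>b. comp_rep \<phi> (delta m) b" using ex delta_Aplus[OF m] by blast
    then show ?thesis unfolding B_def by (rule someI_ex)
  qed
  have BL1: "B m (m ^ c0) = of_nat m powr (-c1)" if "1 \<le> m" for m
    by (rule lead_B(1)[OF crB[OF that] mp that ph lim])
  have BL2: "B m j = 0" if "1 \<le> m" "1 \<le> j" "j < m ^ c0" for m j
    by (rule lead_B(2)[OF crB[OF that(1)] mp that(1) ph lim that(2,3)])
  have Bnz: "B m (m ^ c0) \<noteq> 0" if "1 \<le> m" for m using BL1[OF that] that by simp
  have disj: "B n j = 0 \<or> B m j = 0" if "n \<noteq> m" "1 \<le> n" "1 \<le> m" for n m j
    by (rule iso_disj[OF crB[OF that(2)] crB[OF that(3)] mp iso that])
  have c0: "1 \<le> c0"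
  proof (rule ccontr)
    assume "\<not> 1 \<le> c0"
    then have z: "c0 = 0" by simp
    have "B 2 1 \<noteq> 0" using Bnz[of 2] z by simp
    moreover have "B 3 1 \<noteq> 0" using Bnz[of 3] z by simp
    ultimately show False using disj[of 2 3 1] by simp
  qed
  define u where "u = B 2"
  define L where "L = (2::nat) ^ c0"
  have two: "(1::nat) \<le> 2" by simp
  note Bp2 = Bprop[OF crB[OF two] mp]
  have au: "abss u" and u0: "u 0 = 0" using Bp2 by (simp_all add: u_def)
  have L1: "1 \<le> L" by (simp add: L_def)
  have uL: "u L \<noteq> 0" using Bnz[OF two] by (simp add: u_def L_def)
  have uz: "u j = 0" if "1 \<le> j" "j < L" for j using BL2[OF two that(1)] that(2) by (simp add: u_def L_def)
  define P where "P k = B (2 ^ k)" for k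
  have two_k: "1 \<le> (2::nat) ^ k" for k by simp
  have aP: "abss (P k)" for k using Bprop(1)[OF crB[OF two_k] mp] by (simp add: P_def)
  have P0: "P k 0 = 0" for k using Bprop(2)[OF crB[OF two_k] mp] by (simp add: P_def)
  have dP: "dseries (P k) (of_real \<sigma>) = dseries u (of_real \<sigma>) ^ k" if "0 < \<sigma>" for k \<sigma>
  proof -
    have s: "of_real \<sigma> \<in> halfplane 0" using that by (simp add: halfplane_def)
    have "dseries (P k) (of_real \<sigma>) = of_nat (2 ^ k) powr (- \<phi> (of_real \<sigma>))"
      using Bprop(3)[OF crB[OF two_k] mp s] by (simp add: P_def)
    also have "\<dots> = (of_nat 2 powr (- \<phi> (of_real \<sigma>))) ^ k" by (rule npow_pow2) simp
    also have "of_nat 2 powr (- \<phi> (of_real \<sigma>)) = dseries u (of_real \<sigma>)"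
      using Bp2(3)[OF s] by (simp add: u_def)
    finally show ?thesis .
  qed
  have single: "u j = 0" if jL: "j \<noteq> L" for j
  proof (rule ccontr)
    assume nz: "u j \<noteq> 0"
    have ex2: "\<exists>j. L < j \<and> u j \<noteq> 0"
    proof -
      have "j \<noteq> 0"
      proof
        assume "j = 0" then show False using nz u0 by simp
      qed
      then have "\<not> j < L" using uz nz by auto
      then have "L < j" using jL by simp
      then show ?thesis using nz by blast
    qed
    define M where "M = (LEAST j. L < j \<and> u j \<noteq> 0)"
    have LM: "L < M" and uM: "u M \<noteq> 0" using LeastI_ex[OF ex2] by (simp_all add: M_def)
    have uz2: "u i = 0" if "L < i" "i < M" for i
      using not_less_Least[of i "\<lambda>j. L < j \<and> u j \<noteq> 0"] that by (auto simp: M_def)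
    obtain k where k: "k \<ge> c0" "P k (L ^ (k - c0) * M ^ c0) \<noteq> 0"
      using expansion[OF au u0 L1 uL uz LM uM uz2 aP P0 dP c0] by blast
    define m where "m = 2 ^ (k - c0) * M"
    have m1: "1 \<le> m" using LM by (simp add: m_def)
    have "m ^ c0 = (2 ^ (k - c0)) ^ c0 * M ^ c0" by (simp add: m_def power_mult_distrib)
    also have "(2 ^ (k - c0)) ^ c0 = ((2::nat) ^ c0) ^ (k - c0)"
      by (simp only: power_mult[symmetric] mult.commute)
    finally have mc: "m ^ c0 = L ^ (k - c0) * M ^ c0" by (simp add: L_def)
    have mne: "2 ^ k \<noteq> m"
    proof
      assume "2 ^ k = m"
      moreover have "(2::nat) ^ k = 2 ^ (k - c0) * 2 ^ c0" using k(1) by (simp add: power_add[symmetric])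
      ultimately have "M = 2 ^ c0" by (simp add: m_def)
      then show False using LM by (simp add: L_def)
    qed
    have "B (2 ^ k) (m ^ c0) \<noteq> 0" using k(2) by (simp add: P_def mc)
    moreover have "B m (m ^ c0) \<noteq> 0" by (rule Bnz[OF m1])
    ultimately show False using disj[OF mne two_k m1, of "m ^ c0"] by simp
  qed
  define a where "a = u L"
  have ufun: "u = (\<lambda>j. a * delta L j)" by (auto simp: fun_eq_iff a_def delta_def single)
  have na: "norm a = 1"
  proof -
    have "Aplus_norm u = Aplus_norm (delta 2)" using iso delta_Aplus[OF two] crB[OF two] by (simp add: u_def)
    then have "Aplus_norm u = 1" by (simp add: norm_delta)
    moreover have "Aplus_norm u = norm a"
    proof -
      have "(\<lambda>j. norm (u j)) = (\<lambda>j. if j = L then norm a else 0)"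
        by (auto simp: ufun delta_def fun_eq_iff)
      then show ?thesis unfolding Aplus_norm_def using sums_single[of L "\<lambda>_. norm a"] by (simp add: sums_iff)
    qed
    ultimately show ?thesis by simp
  qed
  have n2: "(of_nat 2 :: complex) powr w = exp (w * of_real (ln 2))" for w
    using npow[of 2 w] by simp
  have eqs: "exp (- \<phi> s * of_real (ln 2)) = a * exp (- s * of_real (ln 2)) ^ c0" if s: "s \<in> halfplane 0" for s
  proof -
    have "of_nat 2 powr (- \<phi> s) = dseries u s" using Bp2(3)[OF s] by (simp add: u_def)
    also have "\<dots> = a * of_nat L powr (-s)" using hp_re[OF s]
      by (simp add: ufun dseries_cmult[OF abss_delta] dseries_delta)
    also have "of_nat L powr (-s) = (of_nat 2 powr (-s)) ^ c0" unfolding L_def by (rule npow_pow2) simp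
    finally have "of_nat 2 powr (- \<phi> s) = a * (of_nat 2 powr (-s)) ^ c0" .
    then show ?thesis by (simp only: n2)
  qed
  show ?thesis using c0 phi_form[OF hol eqs na] by blast
qed

theorem theorem22:
  fixes \<phi> \<psi> :: "complex \<Rightarrow> complex" and c0 :: nat
  assumes "\<phi> holomorphic_on halfplane 0"
    and "\<phi> ` halfplane 0 \<subseteq> halfplane 0"
    and "\<not> (\<exists>c. \<forall>s \<in> halfplane 0. \<phi> s = c)"
    and "\<psi> \<in> Dclass"
    and "\<forall>s \<in> halfplane 0. \<phi> s = of_nat c0 * s + \<psi> s"
    and "\<forall>a \<in> Aplus. \<exists>b. comp_rep \<phi> a b"
  shows "(\<forall>a \<in> Aplus. \<forall>b. comp_rep \<phi> a b \<longrightarrow> Aplus_norm b = Aplus_norm a)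
     \<longleftrightarrow> (c0 \<ge> 1 \<and> (\<exists>\<tau>::real. \<forall>s \<in> halfplane 0. \<phi> s = of_nat c0 * s + \<i> * of_real \<tau>))"
proof
  assume iso: "\<forall>a \<in> Aplus. \<forall>b. comp_rep \<phi> a b \<longrightarrow> Aplus_norm b = Aplus_norm a"
  show "c0 \<ge> 1 \<and> (\<exists>\<tau>::real. \<forall>s \<in> halfplane 0. \<phi> s = of_nat c0 * s + \<i> * of_real \<tau>)"
    by (rule forward[OF assms(1,2,4,5,6) iso])
next
  assume R: "c0 \<ge> 1 \<and> (\<exists>\<tau>::real. \<forall>s \<in> halfplane 0. \<phi> s = of_nat c0 * s + \<i> * of_real \<tau>)"
  then obtain \<tau> :: real where c: "1 \<le> c0" and t: "\<forall>s \<in> halfplane 0. \<phi> s = of_nat c0 * s + \<i> * of_real \<tau>"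
    by blast
  show "\<forall>a \<in> Aplus. \<forall>b. comp_rep \<phi> a b \<longrightarrow> Aplus_norm b = Aplus_norm a"
    using backward[OF c t] by blast
qed

end
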